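(* Let $\rho=12\cdots(k-1)k^a$ for some $a\ge1$, $k\ge1$ (a strictly increasing run $1,\dots,k$ followed by $a-1$ further copies of $k$). If patterns $\sigma$ and $\tau$ are strongly partition equivalent, then $p_n(\rho,\sigma)=p_n(\rho,\tau)$ for all $n\ge0$.
   Context: Set partitions are written in canonical sequential form (restricted growth words; $\pi_j$ is the index of the block containing $j$, blocks ordered by their minima, so the $i$-th block is the set of positions carrying letter $i$). Pattern containment means having a subsequence order-isomorphic to the pattern. $p_n(T)$ is the number of partitions of $[n]$ avoiding all patterns in $T$. Patterns $\sigma,\tau$ are strongly partition equivalent if there is a bijection $f$ from $\sigma$-avoiding partitions to $\tau$-avoiding partitions such that for every $\sigma$-avoiding partition $\pi$, $f(\pi)$ has the same number of blocks as $\pi$ and for each $i$ the $i$-th block of $f(\pi)$ has the same size as the $i$-th block of $\pi$. *)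

theory Defs
  imports Main
begin

fun rgf_aux :: "nat \<Rightarrow> nat list \<Rightarrow> bool" where
  "rgf_aux m [] = True"
| "rgf_aux m (x # xs) = (1 \<le> x \<and> x \<le> Suc m \<and> rgf_aux (max m x) xs)"

definition rgf :: "nat list \<Rightarrow> bool" where
  "rgf w = rgf_aux 0 w"

definition order_iso :: "nat list \<Rightarrow> nat list \<Rightarrow> bool" where
  "order_iso u v = (length u = length v \<and>
     (\<forall>i < length u. \<forall>j < length u. (u ! i < u ! j \<longleftrightarrow> v ! i < v ! j)))"

definition contains :: "nat list \<Rightarrow> nat list \<Rightarrow> bool" where
  "contains w p = (\<exists>I. order_iso (nths w I) p)"

definition avoids :: "nat list \<Rightarrow> nat list set \<Rightarrow> bool" where
  "avoids w T = (\<forall>p \<in> T. \<not> contains w p)"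

definition pn :: "nat \<Rightarrow> nat list set \<Rightarrow> nat" where
  "pn n T = card {w. length w = n \<and> rgf w \<and> avoids w T}"

definition block :: "nat list \<Rightarrow> nat \<Rightarrow> nat set" where
  "block w i = {j. j < length w \<and> w ! j = i}"

definition num_blocks :: "nat list \<Rightarrow> nat" where
  "num_blocks w = card (set w)"

definition strongly_equiv :: "nat list \<Rightarrow> nat list \<Rightarrow> bool" where
  "strongly_equiv \<sigma> \<tau> = (\<exists>f. bij_betw f {w. rgf w \<and> \<not> contains w \<sigma>} {w. rgf w \<and> \<not> contains w \<tau>}
     \<and> (\<forall>\<pi>. rgf \<pi> \<and> \<not> contains \<pi> \<sigma> \<longrightarrow>
          num_blocks (f \<pi>) = num_blocks \<pi> \<and> (\<forall>i. card (block (f \<pi>) i) = card (block \<pi> i))))"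

end

theory Submission
  imports Defs "HOL-Library.Sublist"
begin

fun mx :: "nat \<Rightarrow> nat list \<Rightarrow> nat" where
  "mx m [] = m"
| "mx m (x # xs) = mx (max m x) xs"

lemma mx_ge: "m \<le> mx m xs"
  by (induction xs arbitrary: m) (auto intro: le_trans[OF max.cobounded1])

lemma rgf_aux_append: "rgf_aux m (u @ v) = (rgf_aux m u \<and> rgf_aux (mx m u) v)"
  by (induction u arbitrary: m) auto

lemma rgf_aux_ge1: "rgf_aux m w \<Longrightarrow> x \<in> set w \<Longrightarrow> 1 \<le> x"
  by (induction w arbitrary: m) auto

lemma rgf_aux_subseq: "rgf_aux m u \<Longrightarrow> subseq [Suc m..<Suc (mx m u)] u"
proof (induction u arbitrary: m)
  case Nil then show ?case by simp
next
  case (Cons x xs)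
  show ?case
  proof (cases "x = Suc m")
    case True
    with Cons have "subseq [Suc (Suc m)..<Suc (mx (Suc m) xs)] xs" by fastforce
    moreover have "mx (Suc m) xs \<ge> Suc m" by (rule mx_ge)
    moreover have "[Suc m..<Suc (mx (Suc m) xs)] = Suc m # [Suc (Suc m)..<Suc (mx (Suc m) xs)]"
      using calculation(2) by (simp add: upt_conv_Cons)
    ultimately show ?thesis using True by simp
  next
    case False
    with Cons have "max m x = m" by auto
    with Cons show ?thesis by (metis rgf_aux.simps(2) mx.simps(2) list_emb_Cons)
  qed
qed

lemma block_card: "card (block w i) = count_list w i"
proof -
  have "count_list w i = length (filter (\<lambda>x. x = i) w)"
    by (induction w) auto
  then show ?thesis by (simp add: block_def length_filter_conv_card)
qed

lemma order_iso_rho: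
  assumes "i \<ge> k" "k \<ge> 1"
  shows "order_iso ([1..<k] @ replicate a i) ([1..<k] @ replicate a k)"
proof -
  define g where "g c j = (if j < k - 1 then Suc j else (c::nat))" for c j
  have nth: "([1..<k] @ replicate a c) ! j = g c j" if "j < k - 1 + a" for c j
    using that by (auto simp: g_def nth_append)
  show ?thesis unfolding order_iso_def
  proof (intro conjI allI impI)
    show "length ([1..<k] @ replicate a i) = length ([1..<k] @ replicate a k)" by simp
    fix p q assume "p < length ([1..<k] @ replicate a i)" "q < length ([1..<k] @ replicate a i)"
    then have pq: "p < k - 1 + a" "q < k - 1 + a" by auto
    show "(([1..<k] @ replicate a i) ! p < ([1..<k] @ replicate a i) ! q) =
          (([1..<k] @ replicate a k) ! p < ([1..<k] @ replicate a k) ! q)"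
      unfolding nth[OF pq(1)] nth[OF pq(2)] using assms by (auto simp: g_def)
  qed
qed

lemma contains_char:
  assumes "rgf w" "k \<ge> 1" "a \<ge> 1"
  shows "contains w ([1..<k] @ replicate a k) \<longleftrightarrow> (\<exists>i\<ge>k. a \<le> card (block w i))"
proof
  assume "contains w ([1..<k] @ replicate a k)"
  then obtain I where oi: "order_iso (nths w I) ([1..<k] @ replicate a k)"
    unfolding contains_def by blast
  define s where "s = nths w I"
  define \<rho> where "\<rho> = [1..<k] @ replicate a k"
  have len: "length s = k - 1 + a" using oi by (simp add: order_iso_def s_def)
  have iso: "\<And>p q. p < length s \<Longrightarrow> q < length s \<Longrightarrow> (s!p < s!q) = (\<rho>!p < \<rho>!q)"
    using oi unfolding order_iso_def s_def \<rho>_def by blast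
  have rho: "\<rho> ! j = (if j < k - 1 then Suc j else k)" if "j < k - 1 + a" for j
    using that by (auto simp: \<rho>_def nth_append)
  have ge1: "\<And>x. x \<in> set s \<Longrightarrow> 1 \<le> x"
    using assms(1) set_nths_subset[of w I] rgf_aux_ge1 unfolding rgf_def s_def by blast
  show "\<exists>i\<ge>k. a \<le> card (block w i)"
  proof (cases "a = 0")
    case True then show ?thesis by auto
  next
    case False
    define i where "i = s ! (k - 1)"
    have incr: "j < k \<Longrightarrow> Suc j \<le> s ! j" for j
    proof (induction j)
      case 0
      then show ?case using ge1 len False by (simp)
    next
      case (Suc j)
      then have "s ! j < s ! Suc j" using iso[of j "Suc j"] rho len False by auto
      then show ?case using Suc by auto
    qed
    have ik: "i \<ge> k" using incr[of "k-1"] assms(2) by (simp add: i_def)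
    have eq: "s ! j = i" if "k - 1 \<le> j" "j < k - 1 + a" for j
      using iso[of j "k-1"] iso[of "k-1" j] rho[of j] rho[of "k-1"] that len False
      by (auto simp: i_def)
    have "{k - 1..<k - 1 + a} \<subseteq> {j. j < length s \<and> s ! j = i}"
      using eq len by auto
    moreover have "finite {j. j < length s \<and> s ! j = i}" by simp
    ultimately have "card {k - 1..<k - 1 + a} \<le> card {j. j < length s \<and> s ! j = i}"
      using card_mono by blast
    then have "a \<le> card {j. j < length s \<and> s ! j = i}" by simp
    also have "\<dots> = length (filter (\<lambda>x. x = i) s)"
      by (simp add: length_filter_conv_card)
    also have "\<dots> \<le> length (filter (\<lambda>x. x = i) w)"
      using subseq_filter[of s w "\<lambda>x. x = i"] subseq_conv_nths[of s w] s_def list_emb_length by blast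
    also have "\<dots> = card (block w i)"
      by (simp add: block_def length_filter_conv_card)
    finally show ?thesis using ik by blast
  qed
next
  assume "\<exists>i\<ge>k. a \<le> card (block w i)"
  then obtain i where ik: "i \<ge> k" and ai: "a \<le> count_list w i" by (auto simp: block_card)
  show "contains w ([1..<k] @ replicate a k)"
  proof -
    have "a \<noteq> 0" using assms(3) by simp
    then have "i \<in> set w" using ai by (metis count_notin le_zero_eq)
    define u where "u = takeWhile (\<lambda>x. x \<noteq> i) w"
    define v where "v = dropWhile (\<lambda>x. x \<noteq> i) w"
    have w: "w = u @ v" by (simp add: u_def v_def)
    have "v \<noteq> []" using \<open>i \<in> set w\<close> by (auto simp: v_def dropWhile_eq_Nil_conv)
    then have "hd v = i" using hd_dropWhile[of "\<lambda>x. x \<noteq> i" w] by (simp add: v_def)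
    then obtain v' where v: "v = i # v'" using \<open>v \<noteq> []\<close> by (cases v) auto
    have "rgf_aux (mx 0 u) v" "rgf_aux 0 u" using assms(1) w rgf_aux_append unfolding rgf_def by auto
    then have im: "i \<le> Suc (mx 0 u)" using v by simp
    have s1: "subseq [1..<k] u"
    proof -
      have "[1..<Suc (mx 0 u)] = [1..<k] @ [k..<Suc (mx 0 u)]"
        using im ik assms(2) by (metis le_trans upt_add_eq_append le_add_diff_inverse)
      then have "subseq [1..<k] [1..<Suc (mx 0 u)]" by (metis prefixI prefix_imp_subseq)
      moreover have "subseq [1..<Suc (mx 0 u)] u" using rgf_aux_subseq[OF \<open>rgf_aux 0 u\<close>] by simp
      ultimately show ?thesis by (rule subseq_order.order_trans)
    qed
    have "count_list u i = 0" unfolding u_def by (induction w) auto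
    then have "count_list v i = count_list w i" using w by simp
    have cf: "count_list v i = length (filter (\<lambda>x. x = i) v)" by (induction v) auto
    have "filter (\<lambda>x. x = i) v = replicate (count_list v i) i"
      by (induction v) auto
    then have "subseq (replicate (count_list v i) i) v" using subseq_filter_left[of "\<lambda>x. x = i" v] by simp
    moreover have "subseq (replicate a i) (replicate (count_list v i) i)"
      using ai \<open>count_list v i = count_list w i\<close>
    proof -
      have "replicate (count_list v i) i = replicate a i @ replicate (count_list v i - a) i"
        using ai \<open>count_list v i = count_list w i\<close> by (simp add: replicate_add[symmetric])
      then show ?thesis by (metis prefixI prefix_imp_subseq)
    qed
    ultimately have "subseq (replicate a i) v" using subseq_order.order_trans by blast
    with s1 have "subseq ([1..<k] @ replicate a i) (u @ v)" by (rule list_emb_append_mono)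
    then have "subseq ([1..<k] @ replicate a i) w" using w by simp
    then obtain N where N: "[1..<k] @ replicate a i = nths w N" using subseq_conv_nths by blast
    have "order_iso (nths w N) ([1..<k] @ replicate a k)"
      by (subst N[symmetric]) (rule order_iso_rho[OF ik assms(2)])
    then show ?thesis unfolding contains_def by blast
  qed
qed

lemma len_blocks: "length w = (\<Sum>i\<in>set w. card (block w i))"
proof -
  have "{j. j < length w} = (\<Union>i\<in>set w. block w i)"
    by (auto simp: block_def)
  have "length w = card {j. j < length w}" by simp
  also have "\<dots> = card (\<Union>i\<in>set w. block w i)" using \<open>{j. j < length w} = _\<close> by simp
  also have "\<dots> = (\<Sum>i\<in>set w. card (block w i))"
    by (rule card_UN_disjoint) (auto simp: block_def)
  finally show ?thesis .
qed

lemma set_blocks: "i \<in> set w \<longleftrightarrow> card (block w i) > 0"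
  unfolding block_card using count_list_0_iff[of w i] by (cases "count_list w i") auto

lemma same_blocks:
  assumes "\<forall>i. card (block v i) = card (block w i)"
  shows "length v = length w"
proof -
  have "i \<in> set v \<longleftrightarrow> i \<in> set w" for i
    using set_blocks[of i v] set_blocks[of i w] assms by simp
  then have sv: "set v = set w" by blast
  have "length v = (\<Sum>i\<in>set v. card (block v i))" by (rule len_blocks)
  also have "\<dots> = (\<Sum>i\<in>set w. card (block w i))" unfolding sv using assms by simp
  also have "\<dots> = length w" by (rule len_blocks[symmetric])
  finally show ?thesis .
qed

theorem theorem4p5:
  fixes k a :: nat and \<sigma> \<tau> :: "nat list"
  assumes "k \<ge> 1" and "a \<ge> 1"
    and "rgf \<sigma>" and "rgf \<tau>"
    and "strongly_equiv \<sigma> \<tau>"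
  shows "\<forall>n. pn n {[1..<k] @ replicate a k, \<sigma>} = pn n {[1..<k] @ replicate a k, \<tau>}"
proof
  fix n
  define \<rho> where "\<rho> = [1..<k] @ replicate a k"
  obtain f where bij: "bij_betw f {w. rgf w \<and> \<not> contains w \<sigma>} {w. rgf w \<and> \<not> contains w \<tau>}"
    and bl: "\<And>\<pi>. rgf \<pi> \<Longrightarrow> \<not> contains \<pi> \<sigma> \<Longrightarrow>
          num_blocks (f \<pi>) = num_blocks \<pi> \<and> (\<forall>i. card (block (f \<pi>) i) = card (block \<pi> i))"
    using assms(5) unfolding strongly_equiv_def by blast
  define A where "A = {w. length w = n \<and> rgf w \<and> avoids w {\<rho>, \<sigma>}}"
  define B where "B = {w. length w = n \<and> rgf w \<and> avoids w {\<rho>, \<tau>}}"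
  have key: "length (f \<pi>) = length \<pi> \<and> (contains (f \<pi>) \<rho> \<longleftrightarrow> contains \<pi> \<rho>) \<and>
      rgf (f \<pi>) \<and> \<not> contains (f \<pi>) \<tau>"
    if "rgf \<pi>" "\<not> contains \<pi> \<sigma>" for \<pi>
  proof -
    have fp: "rgf (f \<pi>) \<and> \<not> contains (f \<pi>) \<tau>" using bij that by (auto dest: bij_betwE)
    have b: "\<forall>i. card (block (f \<pi>) i) = card (block \<pi> i)" using bl that by blast
    show ?thesis using fp same_blocks[OF b] b
      contains_char[OF _ assms(1) assms(2)] that(1) unfolding \<rho>_def by simp
  qed
  have inj: "inj_on f A"
    using bij_betw_imp_inj_on[OF bij] by (rule inj_on_subset) (auto simp: A_def avoids_def)
  have "f ` A = B"
  proof
    show "f ` A \<subseteq> B" using key by (auto simp: A_def B_def avoids_def)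
    show "B \<subseteq> f ` A"
    proof
      fix b assume b: "b \<in> B"
      then have "b \<in> f ` {w. rgf w \<and> \<not> contains w \<sigma>}"
        using bij_betw_imp_surj_on[OF bij] by (auto simp: B_def avoids_def)
      then obtain \<pi> where p: "rgf \<pi>" "\<not> contains \<pi> \<sigma>" "b = f \<pi>" by auto
      then have "\<pi> \<in> A" using key[OF p(1,2)] b by (auto simp: A_def B_def avoids_def)
      then show "b \<in> f ` A" using p by auto
    qed
  qed
  then have "card A = card B" using card_image[OF inj] by simp
  then show "pn n {[1..<k] @ replicate a k, \<sigma>} = pn n {[1..<k] @ replicate a k, \<tau>}"
    unfolding pn_def A_def B_def \<rho>_def by simp
qed

end
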